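(* Consider an open quantum system on a finite-dimensional Hilbert space $\mathcal H$ with Hamiltonian $H$ and coupling operators $L_1,\dots,L_K$, and let $V$ be a Lyapunov operator of the system (commuting with $H$). Suppose that either (Condition ES) there is $c>0$ with $\mathcal G(V)\le -cV$, or (Condition DS) $\mathcal G(V)\le0$ and there is $c>0$ with $cV\le\mathfrak D(V)$. Then for every initial density state the state trajectory $\rho_t$ converges to $Z_V$, i.e. every limit point of $\rho_t$ as $t\to\infty$ lies in $Z_V$.
   Context: The density state (positive semidefinite, trace one) evolves by $\dot\rho_t=-i[H,\rho_t]+\sum_{k=1}^K\big(L_k\rho_tL_k^\dagger-\tfrac12L_k^\dagger L_k\rho_t-\tfrac12\rho_tL_k^\dagger L_k\big)$. Standing assumption: the observables considered commute with $H$; for such $X$ the generator is $\mathcal G(X)=\sum_{k=1}^K\big(L_k^\dagger XL_k-\tfrac12L_k^\dagger L_kX-\tfrac12XL_k^\dagger L_k\big)$ and $\frac{d}{dt}\operatorname{tr}(X\rho_t)=\operatorname{tr}(\mathcal G(X)\rho_t)$. A Lyapunov operator is a self-adjoint $V\ge0$ whose smallest eigenvalue is $0$ and with $\mathcal G(V)\le0$. The dissipation functional is $\mathfrak D(X)=\mathcal G(X^\dagger X)-\mathcal G(X^\dagger)X-X^\dagger\mathcal G(X)$; for self-adjoint $V$ this equals $\sum_k[L_k^\dagger,V][V,L_k]$. $Z_V=\{\rho \text{ density state}:\operatorname{tr}(V\rho)=0\}$; convergence of states means convergence of $\operatorname{tr}(\rho Y)$ for all operators $Y$. *)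

theory Defs
  imports "HOL-Analysis.Analysis"
begin

type_synonym 'n op = "complex^'n^'n"

definition adj :: "'n::finite op \<Rightarrow> 'n op" where
  "adj A = (\<chi> i j. cnj (A $ j $ i))"

definition cscale :: "complex \<Rightarrow> 'n::finite op \<Rightarrow> 'n op" where
  "cscale a A = (\<chi> i j. a * A $ i $ j)"

definition cinner :: "complex^'n::finite \<Rightarrow> complex^'n \<Rightarrow> complex" where
  "cinner x y = (\<Sum>i\<in>UNIV. cnj (x $ i) * y $ i)"

definition self_adjoint :: "'n::finite op \<Rightarrow> bool" where
  "self_adjoint A \<longleftrightarrow> adj A = A"

definition psd :: "'n::finite op \<Rightarrow> bool" where
  "psd A \<longleftrightarrow> self_adjoint A \<and> (\<forall>x. Im (cinner x (A *v x)) = 0 \<and> 0 \<le> Re (cinner x (A *v x)))"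

definition loewner_le :: "'n::finite op \<Rightarrow> 'n op \<Rightarrow> bool" where
  "loewner_le A B \<longleftrightarrow> psd (B - A)"

definition density_state :: "'n::finite op \<Rightarrow> bool" where
  "density_state \<rho> \<longleftrightarrow> psd \<rho> \<and> trace \<rho> = 1"

definition lindblad :: "'n::finite op \<Rightarrow> (nat \<Rightarrow> 'n op) \<Rightarrow> nat \<Rightarrow> 'n op \<Rightarrow> 'n op" where
  "lindblad H L K \<rho> = cscale (- \<i>) (H ** \<rho> - \<rho> ** H)
     + (\<Sum>k\<in>{1..K}. L k ** \<rho> ** adj (L k)
          - (1/2::real) *\<^sub>R (adj (L k) ** L k ** \<rho>)
          - (1/2::real) *\<^sub>R (\<rho> ** adj (L k) ** L k))"

text \<open>Generator (Heisenberg picture) for observables commuting with \<open>H\<close>.\<close>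
definition gen :: "(nat \<Rightarrow> 'n::finite op) \<Rightarrow> nat \<Rightarrow> 'n op \<Rightarrow> 'n op" where
  "gen L K X = (\<Sum>k\<in>{1..K}. adj (L k) ** X ** L k
          - (1/2::real) *\<^sub>R (adj (L k) ** L k ** X)
          - (1/2::real) *\<^sub>R (X ** adj (L k) ** L k))"

definition dissip :: "(nat \<Rightarrow> 'n::finite op) \<Rightarrow> nat \<Rightarrow> 'n op \<Rightarrow> 'n op" where
  "dissip L K X = gen L K (adj X ** X) - gen L K (adj X) ** X - adj X ** gen L K X"

text \<open>Lyapunov operator: self-adjoint, \<open>V \<ge> 0\<close>, smallest eigenvalue \<open>0\<close>
  (i.e. \<open>0\<close> is an eigenvalue), and \<open>\<G>(V) \<le> 0\<close>.\<close>
definition lyapunov_op :: "(nat \<Rightarrow> 'n::finite op) \<Rightarrow> nat \<Rightarrow> 'n op \<Rightarrow> bool" where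
  "lyapunov_op L K V \<longleftrightarrow> self_adjoint V \<and> psd V \<and> (\<exists>x. x \<noteq> 0 \<and> V *v x = 0)
     \<and> loewner_le (gen L K V) 0"

definition Z_set :: "'n::finite op \<Rightarrow> 'n op set" where
  "Z_set V = {\<rho>. density_state \<rho> \<and> trace (V ** \<rho>) = 0}"

definition state_conv :: "(nat \<Rightarrow> 'n::finite op) \<Rightarrow> 'n op \<Rightarrow> bool" where
  "state_conv r \<sigma> \<longleftrightarrow> (\<forall>Y. (\<lambda>m. trace (r m ** Y)) \<longlonglongrightarrow> trace (\<sigma> ** Y))"

end

theory Submission
  imports Defs
begin



lemma adj_entry[simp]: "adj A $ i $ j = cnj (A $ j $ i)" by (simp add: adj_def)
lemma cscale_entry[simp]: "cscale a A $ i $ j = a * A $ i $ j" by (simp add: cscale_def)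
lemma adj_adj[simp]: "adj (adj A) = A" by (simp add: vec_eq_iff)
lemma adj_mult: "adj (A ** B) = adj B ** adj A"
  by (simp add: vec_eq_iff matrix_matrix_mult_def mult.commute)
lemma adj_add: "adj (A + B) = adj A + adj B" by (simp add: vec_eq_iff)
lemma adj_diff: "adj (A - B) = adj A - adj B" by (simp add: vec_eq_iff)
lemma scaleR_entry[simp]: "(r *\<^sub>R (A::'n::finite op)) $ i $ j = of_real r * A $ i $ j"
  by (simp add: scaleR_conv_of_real[where 'a=complex])
lemma adj_scaleR: "adj (r *\<^sub>R A) = r *\<^sub>R adj A" by (simp add: vec_eq_iff)
lemma adj_cscale: "adj (cscale a A) = cscale (cnj a) (adj A)" by (simp add: vec_eq_iff)
lemma adj_mat1[simp]: "adj (mat 1 :: 'n::finite op) = mat 1" by (simp add: vec_eq_iff mat_def)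
lemma adj_sum: "adj (sum f S) = sum (\<lambda>k. adj (f k)) S"
  by (induction S rule: infinite_finite_induct) (auto simp: adj_add vec_eq_iff)
lemma adj_zero[simp]: "adj 0 = 0" by (simp add: vec_eq_iff)

lemma trace_sum: "trace (sum f S) = sum (\<lambda>k. trace (f k)) S"
  by (simp add: trace_def sum_component sum.swap[of _ S])
lemma trace_scaleR: "trace (r *\<^sub>R (A::'n::finite op)) = of_real r * trace A"
  by (simp add: trace_def sum_distrib_left scaleR_conv_of_real[where 'a=complex])
lemma trace_cscale: "trace (cscale a A) = a * trace A"
  by (simp add: trace_def sum_distrib_left)
lemma trace_adj: "trace (adj A) = cnj (trace A)" by (simp add: trace_def)
lemma trace_zero[simp]: "trace (0::'n::finite op) = 0" by (simp add: trace_def)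

lemma cinner_adj: "cinner x (A *v y) = cinner (adj A *v x) y"
proof -
  have "cinner x (A *v y) = (\<Sum>i\<in>UNIV. \<Sum>j\<in>UNIV. cnj (x$i) * A$i$j * y$j)"
    by (simp add: cinner_def matrix_vector_mult_def sum_distrib_left mult.assoc)
  also have "\<dots> = (\<Sum>j\<in>UNIV. \<Sum>i\<in>UNIV. cnj (x$i) * A$i$j * y$j)" by (rule sum.swap)
  also have "\<dots> = cinner (adj A *v x) y"
    by (simp add: cinner_def matrix_vector_mult_def sum_distrib_right sum_distrib_left mult_ac)
  finally show ?thesis .
qed
lemma cinner_cnj: "cnj (cinner x y) = cinner y x" by (simp add: cinner_def mult.commute)
lemma cnj_mult_self: "cnj z * z = complex_of_real ((cmod z)^2)"
  using complex_norm_square[of z] by (simp add: mult.commute)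
lemma norm_sq_vec: "norm (x::complex^'n::finite) ^ 2 = (\<Sum>i\<in>UNIV. (cmod (x $ i))^2)"
  unfolding norm_vec_def L2_set_def by (rule real_sqrt_pow2, rule sum_nonneg, simp)
lemma cinner_self: "cinner x x = of_real (norm x ^ 2)"
  unfolding norm_sq_vec cinner_def of_real_sum by (rule sum.cong, simp_all add: cnj_mult_self)

lemma cinner_add_left: "cinner (x + y) z = cinner x z + cinner y z"
  by (simp add: cinner_def distrib_right sum.distrib)
lemma cinner_add_right: "cinner x (y + z) = cinner x y + cinner x z"
  by (simp add: cinner_def distrib_left sum.distrib)
lemma cinner_diff_left: "cinner (x - y) z = cinner x z - cinner y z"
  by (simp add: cinner_def left_diff_distrib sum_subtractf)
lemma cinner_diff_right: "cinner x (y - z) = cinner x y - cinner x z"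
  by (simp add: cinner_def right_diff_distrib sum_subtractf)
lemma cinner_smult_left: "cinner (w *s x) y = cnj w * cinner x y"
  by (simp add: cinner_def sum_distrib_left mult_ac)
lemma cinner_smult_right: "cinner x (w *s y) = w * cinner x y"
  by (simp add: cinner_def sum_distrib_left mult_ac)
lemma cinner_zero_right[simp]: "cinner x 0 = 0" by (simp add: cinner_def)
lemma cinner_zero_left[simp]: "cinner 0 x = 0" by (simp add: cinner_def)
lemma mv_add: "A *v (x + y) = A *v x + A *v (y::complex^'n::finite)"
  by (simp add: matrix_vector_right_distrib)
lemma mv_smult: "(A::'n::finite op) *v (w *s x) = w *s (A *v x)"
  by (simp add: vec_eq_iff matrix_vector_mult_def sum_distrib_left mult_ac)

lemma sa_cinner: "self_adjoint A \<Longrightarrow> cinner x (A *v y) = cnj (cinner y (A *v x))"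
  by (metis cinner_adj cinner_cnj self_adjoint_def)

lemma sa_qf_real: "self_adjoint A \<Longrightarrow> Im (cinner x (A *v x)) = 0"
proof -
  assume "self_adjoint A"
  hence "cinner x (A *v x) = cnj (cinner x (A *v x))" by (rule sa_cinner)
  hence "Im (cinner x (A *v x)) = - Im (cinner x (A *v x))" by (metis cnj.sel(2))
  thus ?thesis by linarith
qed

lemma qf_comb: "cinner (x + w *s y) (A *v (x + w *s y)) = cinner x (A*v x) + w * cinner x (A *v y)
   + cnj w * cinner y (A *v x) + cnj w * w * cinner y (A *v y)"
  by (simp add: mv_add mv_smult cinner_add_left cinner_add_right cinner_smult_left cinner_smult_right algebra_simps)

lemma real_cs_aux:
  fixes a b m :: real
  assumes "a \<ge> 0" "b \<ge> 0" "m \<ge> 0" and h: "\<And>t. a - 2*t*m + t^2*m*b \<ge> 0"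
  shows "m \<le> a * b"
proof (cases "b > 0")
  case True
  have "a - 2*(1/b)*m + (1/b)^2*m*b \<ge> 0" by (rule h)
  hence "a - m/b \<ge> 0" using True by (simp add: power2_eq_square field_simps)
  thus ?thesis using True by (simp add: field_simps)
next
  case False
  hence b0: "b = 0" using assms by simp
  show ?thesis
  proof (rule ccontr)
    assume "\<not> m \<le> a*b"
    hence "m > 0" using b0 by simp
    have "a - 2*((a+1)/(2*m))*m + ((a+1)/(2*m))^2*m*b \<ge> 0" by (rule h)
    thus False using \<open>m > 0\<close> b0 by (simp add: field_simps)
  qed
qed

lemma psd_cs:
  assumes "psd A"
  shows "(cmod (cinner x (A *v y)))^2 \<le> Re (cinner x (A *v x)) * Re (cinner y (A *v y))"
proof -
  have sa: "self_adjoint A" using assms by (simp add: psd_def)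
  define z where "z = cinner x (A *v y)"
  have zy: "cinner y (A *v x) = cnj z" using sa_cinner[OF sa, of y x] by (simp add: z_def)
  have "\<And>t. Re (cinner x (A *v x)) - 2*t*(cmod z)^2 + t^2*(cmod z)^2 * Re (cinner y (A *v y)) \<ge> 0"
  proof -
    fix t :: real
    define w where "w = - (of_real t * cnj z)"
    have "0 \<le> Re (cinner (x + w *s y) (A *v (x + w *s y)))" using assms by (simp add: psd_def)
    also have "\<dots> = Re (cinner x (A *v x)) - 2*t*(cmod z)^2 + t^2*(cmod z)^2 * Re (cinner y (A *v y))"
    proof -
      have e1: "w * z = - of_real (t * (cmod z)^2)"
        by (simp add: w_def cnj_mult_self[of z] mult.assoc)
      have e2: "cnj w * cnj z = - of_real (t * (cmod z)^2)"
        using e1 by (metis complex_cnj_cnj complex_cnj_minus complex_cnj_mult complex_cnj_complex_of_real)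
      have e3: "cnj w * w = of_real (t^2 * (cmod z)^2)"
        using cnj_mult_self[of w] by (simp add: w_def norm_mult power_mult_distrib)
      show ?thesis unfolding qf_comb zy z_def[symmetric]
        by (simp add: e1 e2 e3 power2_eq_square)
    qed
    finally show "Re (cinner x (A *v x)) - 2*t*(cmod z)^2 + t^2*(cmod z)^2 * Re (cinner y (A *v y)) \<ge> 0" .
  qed
  then show ?thesis unfolding z_def[symmetric]
    by (intro real_cs_aux) (use assms in \<open>auto simp: psd_def\<close>)
qed

lemma psd_sa: "psd A \<Longrightarrow> self_adjoint A" by (simp add: psd_def)
lemma psd_nonneg: "psd A \<Longrightarrow> 0 \<le> Re (cinner x (A *v x))" by (simp add: psd_def)
lemma psd_real: "psd A \<Longrightarrow> Im (cinner x (A *v x)) = 0" by (simp add: psd_def)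

lemma psd_kernel:
  assumes "psd A" "Re (cinner x (A *v x)) = 0"
  shows "A *v x = 0"
proof -
  have "(cmod (cinner (A *v x) (A *v x)))^2 \<le> Re (cinner (A *v x) (A *v (A *v x))) * Re (cinner x (A *v x))"
    by (rule psd_cs[OF assms(1)])
  hence "(norm (A *v x))^4 \<le> 0" using assms(2) by (simp add: cinner_self norm_power)
  thus ?thesis by simp
qed

lemma cinner_axis_left: "cinner (axis i 1) v = v $ i"
proof -
  have "cinner (axis i 1) v = (\<Sum>k\<in>UNIV. if k = i then v $ k else 0)"
    unfolding cinner_def by (rule sum.cong) (auto simp: axis_def)
  thus ?thesis by simp
qed
lemma mv_axis: "((A::'n::finite op) *v axis j 1) $ k = A $ k $ j"
proof -
  have "((A::'n::finite op) *v axis j 1) $ k = (\<Sum>l\<in>UNIV. if l = j then A $ k $ l else 0)"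
    unfolding matrix_vector_mult_def vec_lambda_beta by (rule sum.cong) (auto simp: axis_def)
  thus ?thesis by simp
qed
lemma entry_cinner: "A $ i $ j = cinner (axis i 1) ((A::'n::finite op) *v axis j 1)"
  by (simp add: cinner_axis_left mv_axis)

lemma psd_entry_cs: "psd A \<Longrightarrow> (cmod (A $ i $ j))^2 \<le> Re (A $ i $ i) * Re (A $ j $ j)"
  using psd_cs[of A "axis i 1" "axis j 1"] by (simp add: entry_cinner[symmetric])

definition outer :: "complex^'n::finite \<Rightarrow> 'n op" where
  "outer v = (\<chi> i j. v $ i * cnj (v $ j))"

lemma outer_entry[simp]: "outer v $ i $ j = v $ i * cnj (v $ j)" by (simp add: outer_def)

lemma trace_outer: "trace (X ** outer v) = cinner v (X *v v)"
  by (simp add: trace_def cinner_def matrix_matrix_mult_def matrix_vector_mult_def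
      sum_distrib_left mult_ac)

lemma outer_mv: "outer w *v y = cinner w y *s w"
  by (simp add: vec_eq_iff matrix_vector_mult_def cinner_def sum_distrib_left mult_ac)

lemma adj_outer: "adj (outer w) = outer w" by (simp add: vec_eq_iff mult.commute)

lemma psd_zero_diag_zero:
  assumes "psd A" "\<forall>i. A $ i $ i = 0"
  shows "A = 0"
proof -
  have "\<And>i j. A $ i $ j = 0" using psd_entry_cs[OF assms(1)] assms(2) by (metis mult_zero_left norm_le_zero_iff power_not_zero zero_complex.sel(1) zero_le_power2 zero_neq_numeral order_antisym_conv power_eq_0_iff)
  thus ?thesis by (simp add: vec_eq_iff)
qed

lemma psd_diag_real: "psd A \<Longrightarrow> A $ i $ i = of_real (Re (A $ i $ i))"
  using psd_real[of A "axis i 1"] by (simp add: entry_cinner[symmetric] complex_eq_iff)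
lemma psd_diag_nonneg: "psd A \<Longrightarrow> 0 \<le> Re (A $ i $ i)"
  using psd_nonneg[of A "axis i 1"] by (simp add: entry_cinner[symmetric])
lemma sa_entry: "self_adjoint A \<Longrightarrow> cnj (A $ k $ i) = A $ i $ k"
  by (metis adj_entry self_adjoint_def)

lemma psd_decomp_aux:
  "\<forall>A::'n::finite op. psd A \<and> card {i. A$i$i \<noteq> 0} \<le> n \<longrightarrow> (\<exists>vs. A = sum_list (map outer vs))"
proof (induction n)
  case 0
  show ?case
  proof (intro allI impI)
    fix A :: "'n op" assume h: "psd A \<and> card {i. A$i$i \<noteq> 0} \<le> 0"
    hence "\<forall>i. A $ i $ i = 0" by auto
    hence "A = 0" using psd_zero_diag_zero h by blast
    thus "\<exists>vs. A = sum_list (map outer vs)" by (intro exI[of _ "[]"]) simp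
  qed
next
  case (Suc n)
  show ?case
  proof (intro allI impI)
    fix A :: "'n op" assume h: "psd A \<and> card {i. A$i$i \<noteq> 0} \<le> Suc n"
    hence pA: "psd A" by simp
    have saA: "self_adjoint A" using pA by (simp add: psd_def)
    show "\<exists>vs. A = sum_list (map outer vs)"
    proof (cases "\<forall>i. A $ i $ i = 0")
      case True
      hence "A = 0" using psd_zero_diag_zero pA by blast
      thus ?thesis by (intro exI[of _ "[]"]) simp
    next
      case False
      then obtain i where ii: "A $ i $ i \<noteq> 0" by auto
      define d where "d = Re (A $ i $ i)"
      have Aii: "A $ i $ i = of_real d" using psd_diag_real[OF pA] d_def by simp
      have "d \<ge> 0" using psd_diag_nonneg[OF pA, of i] unfolding d_def .
      moreover have "d \<noteq> 0" using ii Aii by auto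
      ultimately have dpos: "d > 0" by simp
      define w :: "complex^'n" where "w = (\<chi> k. A $ k $ i / of_real (sqrt d))"
      define B where "B = A - outer w"
      have cw: "cinner w y = cinner (axis i 1) (A *v y) / of_real (sqrt d)" for y
      proof -
        have "cinner w y = (\<Sum>k\<in>UNIV. A $ i $ k * y $ k) / of_real (sqrt d)"
          unfolding cinner_def w_def by (simp add: sum_divide_distrib sa_entry[OF saA])
        also have "\<dots> = cinner (axis i 1) (A *v y) / of_real (sqrt d)"
          by (simp add: cinner_axis_left matrix_vector_mult_def)
        finally show ?thesis .
      qed
      have pB: "psd B"
      proof -
        have saB: "self_adjoint B"
          using saA by (simp add: self_adjoint_def B_def adj_diff adj_outer)
        have "0 \<le> Re (cinner y (B *v y))" for y
        proof -
          have e: "cinner y (B *v y) = cinner y (A *v y) - of_real ((cmod (cinner w y))^2)"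
            by (simp add: B_def matrix_vector_mult_diff_rdistrib cinner_diff_right outer_mv
                cinner_smult_right cinner_cnj[symmetric, of w y] cnj_mult_self)
          have "(cmod (cinner w y))^2 = (cmod (cinner (axis i 1) (A *v y)))^2 / d"
            using dpos by (simp add: cw norm_divide power_divide)
          also have "\<dots> \<le> Re (cinner (axis i 1) (A *v axis i 1)) * Re (cinner y (A *v y)) / d"
            using psd_cs[OF pA, of "axis i 1" y] dpos by (simp add: divide_right_mono)
          also have "\<dots> = Re (cinner y (A *v y))"
            using dpos by (simp add: entry_cinner[symmetric] d_def)
          finally show ?thesis using e by simp
        qed
        thus ?thesis using saB sa_qf_real[OF saB] by (simp add: psd_def)
      qed
      have Bjj: "B $ j $ j = A $ j $ j - of_real ((cmod (A $ j $ i))^2 / d)" for j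
      proof -
        have "B $ j $ j = A $ j $ j - w $ j * cnj (w $ j)" by (simp add: B_def)
        also have "w $ j * cnj (w $ j) = of_real ((cmod (A $ j $ i))^2 / d)"
        proof -
          have s: "complex_of_real (sqrt d) * complex_of_real (sqrt d) = of_real d"
            using dpos by (metis of_real_mult real_sqrt_mult_self abs_of_pos)
          have c: "A $ j $ i * cnj (A $ j $ i) = of_real ((cmod (A $ j $ i))^2)"
            using cnj_mult_self[of "A $ j $ i"] by (simp add: mult.commute)
          have "w $ j * cnj (w $ j) = (A $ j $ i * cnj (A $ j $ i)) /
              (complex_of_real (sqrt d) * complex_of_real (sqrt d))" by (simp add: w_def)
          also have "\<dots> = of_real ((cmod (A $ j $ i))^2 / d)" unfolding s c of_real_divide ..
          finally show ?thesis .
        qed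
        finally show ?thesis .
      qed
      have sub: "{j. B$j$j \<noteq> 0} \<subseteq> {j. A$j$j \<noteq> 0} - {i}"
      proof
        fix j assume "j \<in> {j. B$j$j \<noteq> 0}"
        hence bj: "B $ j $ j \<noteq> 0" by simp
        have "j \<noteq> i"
        proof
          assume "j = i"
          hence "B $ j $ j = of_real d - of_real (d^2 / d)" using Bjj[of i] Aii by simp
          thus False using bj dpos by (simp add: power2_eq_square)
        qed
        moreover have "A $ j $ j \<noteq> 0"
        proof
          assume a0: "A $ j $ j = 0"
          have "(cmod (A $ j $ i))^2 \<le> Re (A$j$j) * Re (A$i$i)" by (rule psd_entry_cs[OF pA])
          hence "A $ j $ i = 0" using a0 by simp
          thus False using bj Bjj[of j] a0 by simp
        qed
        ultimately show "j \<in> {j. A$j$j \<noteq> 0} - {i}" by simp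
      qed
      have "card {j. B$j$j \<noteq> 0} \<le> card ({j. A$j$j \<noteq> 0} - {i})"
        by (rule card_mono[OF _ sub]) simp
      also have "\<dots> = card {j. A$j$j \<noteq> 0} - 1" using ii by (simp add: card_Diff_singleton)
      also have "\<dots> \<le> n" using conjunct2[OF h] by linarith
      finally obtain vs where "B = sum_list (map outer vs)" using Suc.IH pB by blast
      hence "A = sum_list (map outer (w # vs))" by (simp add: B_def) (metis add.commute diff_add_cancel)
      thus ?thesis by blast
    qed
  qed
qed

lemma psd_decomp: "psd (A::'n::finite op) \<Longrightarrow> \<exists>vs. A = sum_list (map outer vs)"
  using psd_decomp_aux by blast

lemma trace_sum_list_outer:
  "trace (X ** sum_list (map outer vs)) = (\<Sum>v\<leftarrow>vs. cinner v (X *v v))"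
  by (induction vs) (simp_all add: matrix_add_ldistrib trace_add trace_outer)
lemma trace_sum_list_outer1:
  "trace (sum_list (map outer vs) :: 'n::finite op) = (\<Sum>v\<leftarrow>vs. of_real ((norm v)^2))"
  using trace_sum_list_outer[of "mat 1" vs] by (simp add: cinner_self)

lemma sum_list_Re_nonneg: "(\<And>v. v \<in> set vs \<Longrightarrow> 0 \<le> Re (f v)) \<Longrightarrow> 0 \<le> Re (\<Sum>v\<leftarrow>vs. f v)"
  by (induction vs) auto
lemma sum_list_Im_zero: "(\<And>v. v \<in> set vs \<Longrightarrow> Im (f v) = 0) \<Longrightarrow> Im (\<Sum>v\<leftarrow>vs. f v) = 0"
  by (induction vs) auto

lemma trace_psd_nonneg: "psd R \<Longrightarrow> psd Q \<Longrightarrow> 0 \<le> Re (trace (Q ** R))"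
  by (metis psd_decomp trace_sum_list_outer sum_list_Re_nonneg psd_nonneg)
lemma trace_psd_real: "psd R \<Longrightarrow> self_adjoint Q \<Longrightarrow> Im (trace (Q ** R)) = 0"
  by (metis psd_decomp trace_sum_list_outer sum_list_Im_zero sa_qf_real)
lemma mm_add_left: "(A + B) ** C = A ** C + B ** (C::'n::finite op)"
  by (simp add: vec_eq_iff matrix_matrix_mult_def distrib_right sum.distrib)
lemma mm_scaleR_left: "(r *\<^sub>R A) ** B = r *\<^sub>R ((A::'n::finite op) ** B)"
  by (simp add: scalar_matrix_assoc)
lemma mm_scaleR_right: "A ** (r *\<^sub>R B) = r *\<^sub>R ((A::'n::finite op) ** B)"
  by (simp add: vec_eq_iff matrix_matrix_mult_def sum_distrib_left mult_ac scaleR_conv_of_real[where 'a=complex])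
lemma mm_cscale_left: "(cscale a A) ** B = cscale a ((A::'n::finite op) ** B)"
  by (simp add: vec_eq_iff matrix_matrix_mult_def sum_distrib_left mult_ac)
lemma mm_cscale_right: "A ** (cscale a B) = cscale a ((A::'n::finite op) ** B)"
  by (simp add: vec_eq_iff matrix_matrix_mult_def sum_distrib_left mult_ac)
lemma mm_sum_left: "(sum f S) ** B = sum (\<lambda>k. f k ** (B::'n::finite op)) S"
  by (induction S rule: infinite_finite_induct) (auto simp: mm_add_left)
lemma mm_sum_right: "B ** (sum f S) = sum (\<lambda>k. (B::'n::finite op) ** f k) S"
  by (induction S rule: infinite_finite_induct) (auto simp: matrix_add_ldistrib)
lemma mm_diff_left: "(A - B) ** C = A ** C - B ** (C::'n::finite op)"
  by (simp add: vec_eq_iff matrix_matrix_mult_def left_diff_distrib sum_subtractf)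
lemma mm_diff_right: "C ** (A - B) = C ** A - C ** (B::'n::finite op)"
  by (simp add: vec_eq_iff matrix_matrix_mult_def right_diff_distrib sum_subtractf)
lemma cscale_add: "cscale a (A + B) = cscale a A + cscale a B"
  by (simp add: vec_eq_iff distrib_left)
lemma cscale_diff: "cscale a (A - B) = cscale a A - cscale a B"
  by (simp add: vec_eq_iff right_diff_distrib)
lemma cscale_scaleR: "cscale a (r *\<^sub>R A) = r *\<^sub>R cscale a A"
  by (simp add: vec_eq_iff mult_ac)
lemma mv_sum: "(sum f S) *v x = sum (\<lambda>k. f k *v (x::complex^'n::finite)) S"
  by (induction S rule: infinite_finite_induct) (auto simp: matrix_vector_mult_add_rdistrib)
lemma mv_scaleR: "(r *\<^sub>R A) *v x = of_real r *s ((A::'n::finite op) *v x)"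
  by (simp add: vec_eq_iff matrix_vector_mult_def sum_distrib_left mult_ac scaleR_conv_of_real[where 'a=complex])
lemma mv_cscale: "(cscale a A) *v x = a *s ((A::'n::finite op) *v x)"
  by (simp add: vec_eq_iff matrix_vector_mult_def sum_distrib_left mult_ac)
lemma cinner_sum_right: "cinner x (sum f S) = sum (\<lambda>k. cinner x (f k)) S"
  by (induction S rule: infinite_finite_induct) (auto simp: cinner_add_right)

lemma lindblad_add: "lindblad H L K (A + B) = lindblad H L K A + lindblad H L K B"
  unfolding lindblad_def
  by (simp add: matrix_add_ldistrib mm_add_left cscale_add sum.distrib[symmetric]
      scaleR_add_right cscale_diff algebra_simps)
lemma lindblad_scaleR: "lindblad H L K (r *\<^sub>R A) = r *\<^sub>R lindblad H L K A"
  unfolding lindblad_def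
  by (simp add: mm_scaleR_left mm_scaleR_right cscale_scaleR cscale_diff scaleR_sum_right
      scaleR_diff_right scaleR_add_right)
lemma lindblad_diff: "lindblad H L K (A - B) = lindblad H L K A - lindblad H L K B"
  using lindblad_add[of H L K "A - B" B] by simp
lemma linear_lindblad: "linear (lindblad H L K)"
  by (rule linearI) (simp_all add: lindblad_add lindblad_scaleR)
lemma loewner_trace: "loewner_le A B \<Longrightarrow> psd R \<Longrightarrow> Re (trace (A ** R)) \<le> Re (trace (B ** R))"
  using trace_psd_nonneg[of R "B - A"]
  by (simp add: loewner_le_def mm_diff_left trace_sub)



lemma tr3: "trace (A ** B ** C) = trace (C ** A ** (B::'n::finite op))"
  by (simp add: trace_mul_sym[of "A ** B" C] matrix_mul_assoc)

lemma trace_summand_zero: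
  "trace (L ** \<rho> ** adj L - (1/2::real) *\<^sub>R (adj L ** L ** \<rho>) - (1/2::real) *\<^sub>R (\<rho> ** adj L ** L)) = 0"
proof -
  have a: "trace (L ** \<rho> ** adj L) = trace (adj L ** L ** \<rho>)" by (rule tr3)
  have c: "trace (\<rho> ** adj L ** L) = trace (adj L ** L ** \<rho>)"
    by (simp add: tr3[of \<rho> "adj L" L] tr3[of L \<rho> "adj L"])
  have "trace (L ** \<rho> ** adj L - (1/2::real) *\<^sub>R (adj L ** L ** \<rho>) - (1/2::real) *\<^sub>R (\<rho> ** adj L ** L))
     = trace (L ** \<rho> ** adj L) - of_real (1/2) * trace (adj L ** L ** \<rho>) - of_real (1/2) * trace (\<rho> ** adj L ** L)"
    by (simp only: trace_sub trace_scaleR)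
  also have "\<dots> = 0" unfolding a c by (simp add: algebra_simps)
  finally show ?thesis .
qed

lemma trace_lindblad: "trace (lindblad H L K \<rho>) = 0"
proof -
  have "trace (\<rho> ** H) = trace (H ** \<rho>)" by (rule trace_mul_sym)
  hence "trace (H ** \<rho> - \<rho> ** H) = 0" by (simp only: trace_sub) simp
  thus ?thesis unfolding lindblad_def
    by (simp only: trace_add trace_cscale trace_sum trace_summand_zero) simp
qed

lemma trace_V_summand:
  "trace (V ** (L ** \<rho> ** adj L - (1/2::real) *\<^sub>R (adj L ** L ** \<rho>) - (1/2::real) *\<^sub>R (\<rho> ** adj L ** L)))
   = trace ((adj L ** V ** L - (1/2::real) *\<^sub>R (adj L ** L ** V) - (1/2::real) *\<^sub>R (V ** adj L ** L)) ** \<rho>)"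
proof -
  have a: "trace (V ** (L ** \<rho> ** adj L)) = trace (adj L ** V ** L ** \<rho>)"
  proof -
    have "trace (V ** (L ** \<rho> ** adj L)) = trace ((V ** L) ** \<rho> ** adj L)"
      by (simp add: matrix_mul_assoc)
    also have "\<dots> = trace (adj L ** (V ** L) ** \<rho>)" by (rule tr3)
    finally show ?thesis by (simp add: matrix_mul_assoc)
  qed
  have b: "trace (V ** (adj L ** L ** \<rho>)) = trace (V ** adj L ** L ** \<rho>)"
    by (simp add: matrix_mul_assoc)
  have c: "trace (V ** (\<rho> ** adj L ** L)) = trace (adj L ** L ** V ** \<rho>)"
  proof -
    have "trace (V ** (\<rho> ** adj L ** L)) = trace ((V ** \<rho>) ** (adj L ** L))"
      by (simp add: matrix_mul_assoc)
    also have "\<dots> = trace ((adj L ** L) ** (V ** \<rho>))" by (rule trace_mul_sym)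
    finally show ?thesis by (simp add: matrix_mul_assoc)
  qed
  show ?thesis
    by (simp add: mm_diff_right mm_diff_left mm_scaleR_right mm_scaleR_left trace_sub trace_scaleR a b c)
qed

lemma trace_V_lindblad:
  assumes "H ** V = V ** H"
  shows "trace (V ** lindblad H L K \<rho>) = trace (gen L K V ** \<rho>)"
proof -
  have "trace (V ** cscale (- \<i>) (H ** \<rho> - \<rho> ** H)) = 0"
  proof -
    have "trace (V ** (\<rho> ** H)) = trace (V ** \<rho> ** H)" by (simp add: matrix_mul_assoc)
    also have "\<dots> = trace (H ** V ** \<rho>)" by (rule tr3)
    also have "\<dots> = trace (V ** (H ** \<rho>))" by (simp add: assms matrix_mul_assoc)
    finally have "trace (V ** (\<rho> ** H)) = trace (V ** (H ** \<rho>))" .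
    thus ?thesis by (simp add: mm_cscale_right trace_cscale mm_diff_right trace_sub)
  qed
  hence "trace (V ** lindblad H L K \<rho>) = (\<Sum>k\<in>{1..K}. trace (V ** (L k ** \<rho> ** adj (L k)
     - (1/2::real) *\<^sub>R (adj (L k) ** L k ** \<rho>) - (1/2::real) *\<^sub>R (\<rho> ** adj (L k) ** L k))))"
    unfolding lindblad_def by (simp only: matrix_add_ldistrib mm_sum_right trace_add trace_sum) simp
  also have "\<dots> = (\<Sum>k\<in>{1..K}. trace ((adj (L k) ** V ** L k - (1/2::real) *\<^sub>R (adj (L k) ** L k ** V)
     - (1/2::real) *\<^sub>R (V ** adj (L k) ** L k)) ** \<rho>))"
    by (rule sum.cong[OF refl], rule trace_V_summand)
  also have "\<dots> = trace (gen L K V ** \<rho>)"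
    unfolding gen_def by (simp only: mm_sum_left trace_sum)
  finally show ?thesis .
qed

lemma adj_lindblad:
  assumes "self_adjoint H"
  shows "adj (lindblad H L K \<rho>) = lindblad H L K (adj \<rho>)"
proof -
  have aH: "adj H = H" using assms by (simp add: self_adjoint_def)
  have 1: "adj (cscale (- \<i>) (H ** \<rho> - \<rho> ** H)) = cscale (- \<i>) (H ** adj \<rho> - adj \<rho> ** H)"
    by (simp add: adj_cscale adj_diff adj_mult aH vec_eq_iff algebra_simps)
  have 2: "adj (L ** \<rho> ** adj L - (1/2::real) *\<^sub>R (adj L ** L ** \<rho>) - (1/2::real) *\<^sub>R (\<rho> ** adj L ** L))
     = L ** adj \<rho> ** adj L - (1/2::real) *\<^sub>R (adj L ** L ** adj \<rho>) - (1/2::real) *\<^sub>R (adj \<rho> ** adj L ** L)" for L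
    by (simp add: adj_diff adj_add adj_scaleR adj_mult matrix_mul_assoc algebra_simps)
  show ?thesis unfolding lindblad_def by (simp add: adj_add adj_sum 1 2)
qed

lemma nagumo_key:
  assumes "psd \<eta>" "\<eta> *v x = 0"
  shows "0 \<le> Re (cinner x (lindblad H L K \<eta> *v x))"
proof -
  have sa: "adj \<eta> = \<eta>" using assms(1) by (simp add: psd_def self_adjoint_def)
  have z: "cinner x (\<eta> *v y) = 0" for y
    by (simp add: cinner_adj sa assms(2))
  have 1: "cinner x (cscale (- \<i>) (H ** \<eta> - \<eta> ** H) *v x) = 0"
    by (simp add: mv_cscale cinner_smult_right matrix_vector_mult_diff_rdistrib
        matrix_vector_mul_assoc[symmetric] assms(2) cinner_diff_right z)
  have 2: "0 \<le> Re (cinner x ((L ** \<eta> ** adj L - (1/2::real) *\<^sub>R (adj L ** L ** \<eta>)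
        - (1/2::real) *\<^sub>R (\<eta> ** adj L ** L)) *v x))" for L
  proof -
    have "cinner x ((L ** \<eta> ** adj L) *v x) = cinner (adj L *v x) (\<eta> *v (adj L *v x))"
      by (simp add: matrix_vector_mul_assoc[symmetric] cinner_adj)
    moreover have "0 \<le> Re (cinner (adj L *v x) (\<eta> *v (adj L *v x)))" by (rule psd_nonneg[OF assms(1)])
    ultimately show ?thesis
      by (simp add: matrix_vector_mult_diff_rdistrib mv_scaleR cinner_diff_right cinner_smult_right
          matrix_vector_mul_assoc[symmetric] assms(2) z)
  qed
  define S where "S = (\<lambda>k. L k ** \<eta> ** adj (L k) - (1/2::real) *\<^sub>R (adj (L k) ** L k ** \<eta>)
        - (1/2::real) *\<^sub>R (\<eta> ** adj (L k) ** L k))"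
  have "lindblad H L K \<eta> = cscale (- \<i>) (H ** \<eta> - \<eta> ** H) + (\<Sum>k\<in>{1..K}. S k)"
    unfolding lindblad_def S_def ..
  hence "cinner x (lindblad H L K \<eta> *v x) = cinner x (cscale (- \<i>) (H ** \<eta> - \<eta> ** H) *v x)
     + (\<Sum>k\<in>{1..K}. cinner x (S k *v x))"
    by (simp only: matrix_vector_mult_add_rdistrib mv_sum cinner_add_right cinner_sum_right)
  hence "Re (cinner x (lindblad H L K \<eta> *v x)) = (\<Sum>k\<in>{1..K}. Re (cinner x (S k *v x)))"
    by (simp add: 1 Re_sum)
  also have "\<dots> \<ge> 0" by (rule sum_nonneg) (simp add: S_def 2)
  finally show ?thesis by simp
qed



lemma obs_linear: "linear (\<lambda>M::'n::finite op. Re (trace (X ** M)))"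
  by (rule linearI) (simp_all add: matrix_add_ldistrib trace_add mm_scaleR_right trace_scaleR)
lemma obs_bl: "bounded_linear (\<lambda>M::'n::finite op. Re (trace (X ** M)))"
  using obs_linear linear_conv_bounded_linear by blast
lemma trace_linear: "linear (trace :: 'n::finite op \<Rightarrow> complex)"
  by (rule linearI) (simp_all add: trace_add trace_scaleR scaleR_conv_of_real[where 'a=complex])
lemma trace_bl: "bounded_linear (trace :: 'n::finite op \<Rightarrow> complex)"
  using trace_linear linear_conv_bounded_linear by blast

lemma obs_deriv:
  fixes \<rho> :: "real \<Rightarrow> 'n::finite op"
  assumes "(\<rho> has_vector_derivative D) F"
  shows "((\<lambda>t. Re (trace (X ** \<rho> t))) has_real_derivative Re (trace (X ** D))) F"
  using bounded_linear.has_vector_derivative[OF obs_bl assms]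
  by (simp add: has_real_derivative_iff_has_vector_derivative)

lemma deriv_interior:
  assumes "t > 0" "(f has_vector_derivative D) (at t within {0..})"
  shows "(f has_vector_derivative D) (at t)"
proof -
  have "(f has_vector_derivative D) (at t within {0<..})"
    by (rule has_vector_derivative_within_subset[OF assms(2)]) auto
  thus ?thesis using assms(1) has_vector_derivative_within_open[of t "{0<..}" f D] by simp
qed

lemma real_deriv_interior:
  assumes "t > 0" "(f has_real_derivative D) (at t within {0..})"
  shows "(f has_real_derivative D) (at t)"
  using deriv_interior assms has_real_derivative_iff_has_vector_derivative by blast

lemma cont_from_deriv:
  assumes "\<And>t. t \<ge> 0 \<Longrightarrow> (f has_vector_derivative D t) (at t within {0..})"
  shows "continuous_on {0..} f"
  using assms has_vector_derivative_continuous continuous_on_eq_continuous_within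
  by (metis atLeast_iff)

lemma mono_from_deriv:
  fixes f :: "real \<Rightarrow> real"
  assumes d: "\<And>t. t \<ge> 0 \<Longrightarrow> (f has_real_derivative f' t) (at t within {0..})"
    and nn: "\<And>t. t > 0 \<Longrightarrow> f' t \<ge> 0"
    and ab: "0 \<le> a" "a \<le> b"
  shows "f a \<le> f b"
proof (rule DERIV_nonneg_imp_increasing_open[OF ab(2)])
  show "\<exists>y. DERIV f x :> y \<and> 0 \<le> y" if "a < x" "x < b" for x
    using that ab real_deriv_interior[of x f "f' x"] d nn by force
  have "continuous_on {0..} f"
    by (rule cont_from_deriv[of f f'])
       (use d in \<open>simp add: has_real_derivative_iff_has_vector_derivative\<close>)
  thus "continuous_on {a..b} f" by (rule continuous_on_subset) (use ab in auto)
qed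



lemma trace_const:
  fixes \<rho> :: "real \<Rightarrow> 'n::finite op"
  assumes ode: "\<And>t. t \<ge> 0 \<Longrightarrow> (\<rho> has_vector_derivative lindblad H L K (\<rho> t)) (at t within {0..})"
  shows "t \<ge> 0 \<Longrightarrow> trace (\<rho> t) = trace (\<rho> 0)"
proof -
  have "\<exists>c. \<forall>x\<in>{0..}. trace (\<rho> x) = c"
  proof (rule has_derivative_zero_constant)
    show "convex {0::real..}" by (rule convex_real_interval)
    fix x :: real assume "x \<in> {0..}"
    hence "((\<lambda>t. trace (\<rho> t)) has_vector_derivative trace (lindblad H L K (\<rho> x))) (at x within {0..})"
      using bounded_linear.has_vector_derivative[OF trace_bl ode] by simp
    thus "((\<lambda>t. trace (\<rho> t)) has_derivative (\<lambda>h. 0)) (at x within {0..})"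
      by (simp add: trace_lindblad has_vector_derivative_def)
  qed
  thus "t \<ge> 0 \<Longrightarrow> trace (\<rho> t) = trace (\<rho> 0)" by force
qed

lemma adj_linear: "linear (adj :: 'n::finite op \<Rightarrow> 'n op)"
  by (rule linearI) (simp_all add: adj_add adj_scaleR)
lemma adj_bl: "bounded_linear (adj :: 'n::finite op \<Rightarrow> 'n op)"
  using adj_linear linear_conv_bounded_linear by blast

lemma sa_preserved:
  fixes \<rho> :: "real \<Rightarrow> 'n::finite op"
  assumes ode: "\<And>t. t \<ge> 0 \<Longrightarrow> (\<rho> has_vector_derivative lindblad H L K (\<rho> t)) (at t within {0..})"
    and saH: "self_adjoint H" and sa0: "self_adjoint (\<rho> 0)"
    and t: "t \<ge> 0"
  shows "self_adjoint (\<rho> t)"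
proof -
  define D where "D = (\<lambda>t. \<rho> t - adj (\<rho> t))"
  define lin where "lin = lindblad H L K"
  obtain B0 where B0: "\<And>x. norm (lin x) \<le> B0 * norm x"
    using linear_bounded[OF linear_lindblad[of H L K]] lin_def by blast
  define B where "B = \<bar>B0\<bar>"
  have B: "norm (lin x) \<le> B * norm x" for x
  proof -
    have "B0 * norm x \<le> B * norm x" unfolding B_def by (rule mult_right_mono) auto
    thus ?thesis using B0[of x] by linarith
  qed
  have Bnn: "B \<ge> 0" by (simp add: B_def)
  have dD: "(D has_vector_derivative lin (D s)) (at s within {0..})" if "s \<ge> 0" for s
  proof -
    have "(D has_vector_derivative (lin (\<rho> s) - adj (lin (\<rho> s)))) (at s within {0..})"
      unfolding D_def lin_def
      by (rule has_vector_derivative_diff[OF ode[OF that] bounded_linear.has_vector_derivative[OF adj_bl ode[OF that]]])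
    thus ?thesis by (simp add: lin_def adj_lindblad[OF saH] lindblad_diff D_def)
  qed
  define \<phi> where "\<phi> = (\<lambda>s. inner (D s) (D s))"
  have d\<phi>: "(\<phi> has_real_derivative 2 * inner (D s) (lin (D s))) (at s within {0..})" if "s \<ge> 0" for s
  proof -
    have "(\<phi> has_vector_derivative (inner (D s) (lin (D s)) + inner (lin (D s)) (D s))) (at s within {0..})"
      unfolding \<phi>_def by (rule bounded_bilinear.has_vector_derivative[OF bounded_bilinear_inner dD[OF that] dD[OF that]])
    thus ?thesis by (simp add: has_real_derivative_iff_has_vector_derivative inner_commute)
  qed
  have bnd: "2 * inner (D s) (lin (D s)) \<le> 2 * B * \<phi> s" for s
  proof -
    have "inner (D s) (lin (D s)) \<le> norm (D s) * norm (lin (D s))" by (rule norm_cauchy_schwarz)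
    also have "\<dots> \<le> norm (D s) * (B * norm (D s))" by (rule mult_left_mono[OF B]) simp
    also have "\<dots> = B * \<phi> s" by (simp add: \<phi>_def power2_norm_eq_inner[symmetric] power2_eq_square)
    finally show ?thesis by simp
  qed
  define \<psi> where "\<psi> = (\<lambda>s. - (exp (- (2*B) * s) * \<phi> s))"
  have d\<psi>: "(\<psi> has_real_derivative - (exp (- (2*B) * s) * (- (2*B)) * \<phi> s + 2 * inner (D s) (lin (D s)) * exp (- (2*B) * s))) (at s within {0..})"
    if "s \<ge> 0" for s
  proof -
    have de: "((\<lambda>s. exp (- (2*B) * s)) has_real_derivative exp (- (2*B) * s) * (- (2*B))) (at s within {0..})"
      by (auto intro!: derivative_eq_intros)
    show ?thesis unfolding \<psi>_def by (rule DERIV_minus[OF DERIV_mult[OF de d\<phi>[OF that]]])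
  qed
  have "\<psi> 0 \<le> \<psi> t"
  proof (rule mono_from_deriv[OF d\<psi> _ order_refl t])
    fix s :: real assume "s > 0"
    have "2 * inner (D s) (lin (D s)) * exp (- (2*B) * s) \<le> 2 * B * \<phi> s * exp (- (2*B) * s)"
      by (rule mult_right_mono[OF bnd]) simp
    thus "0 \<le> - (exp (- (2*B) * s) * (- (2*B)) * \<phi> s + 2 * inner (D s) (lin (D s)) * exp (- (2*B) * s))"
      by (simp add: algebra_simps)
  qed
  moreover have "D 0 = 0" using sa0 by (simp add: D_def self_adjoint_def)
  ultimately have "exp (- (2*B) * t) * \<phi> t \<le> 0" by (simp add: \<psi>_def \<phi>_def)
  hence "\<phi> t \<le> 0" by (simp add: mult_le_0_iff)
  hence "D t = 0" by (simp add: \<phi>_def power2_norm_eq_inner[symmetric])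
  thus ?thesis by (simp add: D_def self_adjoint_def)
qed

lemma scaleR_smult: "r *\<^sub>R (x::complex^'n::finite) = of_real r *s x"
  by (simp add: vec_eq_iff scaleR_conv_of_real[where 'a=complex])

lemma qf_scaleR: "cinner (r *\<^sub>R x) (A *v (r *\<^sub>R x)) = of_real (r^2) * cinner x ((A::'n::finite op) *v x)"
  by (simp add: scaleR_smult mv_smult cinner_smult_left cinner_smult_right power2_eq_square)

lemma cinner_expand: "cinner x ((M::'n::finite op) *v x) = (\<Sum>i\<in>UNIV. \<Sum>j\<in>UNIV. cnj (x$i) * M$i$j * x$j)"
  by (simp add: cinner_def matrix_vector_mult_def sum_distrib_left mult.assoc)

lemma qf_bound:
  assumes "norm (x::complex^'n::finite) = 1"
  shows "Re (cinner x (M *v x)) \<le> (\<Sum>i\<in>UNIV. \<Sum>j\<in>UNIV. cmod (M$i$j))"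
proof -
  have xi: "cmod (x$i) \<le> 1" for i using Finite_Cartesian_Product.norm_nth_le[of x i] assms by simp
  have "Re (cinner x (M *v x)) \<le> cmod (cinner x (M *v x))" by (rule complex_Re_le_cmod)
  also have "\<dots> \<le> (\<Sum>i\<in>UNIV. cmod (\<Sum>j\<in>UNIV. cnj (x$i) * M$i$j * x$j))"
    unfolding cinner_expand by (rule norm_sum)
  also have "\<dots> \<le> (\<Sum>i\<in>UNIV. \<Sum>j\<in>UNIV. cmod (cnj (x$i) * M$i$j * x$j))"
    by (rule sum_mono, rule norm_sum)
  also have "\<dots> \<le> (\<Sum>i\<in>UNIV. \<Sum>j\<in>UNIV. cmod (M$i$j))"
  proof (rule sum_mono, rule sum_mono)
    fix i j
    have "cmod (cnj (x$i) * M$i$j * x$j) = cmod (x$i) * cmod (M$i$j) * cmod (x$j)"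
      by (simp add: norm_mult)
    also have "\<dots> \<le> 1 * cmod (M$i$j) * 1"
      by (intro mult_mono xi) auto
    finally show "cmod (cnj (x$i) * M$i$j * x$j) \<le> cmod (M$i$j)" by simp
  qed
  finally show ?thesis .
qed

lemma trace_outer_left: "trace (outer y ** R) = cinner y (R *v y)"
  by (subst trace_mul_sym) (rule trace_outer)

lemma psd_preserved:
  fixes \<rho> :: "real \<Rightarrow> 'n::finite op"
  assumes ode: "\<And>t. t \<ge> 0 \<Longrightarrow> (\<rho> has_vector_derivative lindblad H L K (\<rho> t)) (at t within {0..})"
    and saH: "self_adjoint H" and init: "psd (\<rho> 0)" and t: "t \<ge> 0"
  shows "psd (\<rho> t)"
proof -
  define lin where "lin = lindblad H L K"
  define M where "M = lin (mat 1)"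
  define C where "C = (\<Sum>i\<in>UNIV. \<Sum>j\<in>UNIV. cmod (M$i$j))"
  define lam where "lam = C + 1"
  have sa: "\<And>s. s \<ge> 0 \<Longrightarrow> self_adjoint (\<rho> s)"
    using sa_preserved[OF ode saH] init by (simp add: psd_def)
  define F where "F = (\<lambda>\<epsilon> s x. Re (cinner x (\<rho> s *v x)) + \<epsilon> * exp (lam * s))"
  have dF: "((\<lambda>s. F \<epsilon> s y) has_real_derivative Re (cinner y (lin (\<rho> s) *v y)) + \<epsilon> * (exp (lam * s) * lam)) (at s within {0..})"
    if "s \<ge> 0" for \<epsilon> s y
  proof -
    have d1: "((\<lambda>s. Re (cinner y (\<rho> s *v y))) has_real_derivative Re (cinner y (lin (\<rho> s) *v y))) (at s within {0..})"
      using obs_deriv[OF ode[OF that], of "outer y"] by (simp add: trace_outer_left lin_def)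
    have d2: "((\<lambda>s. \<epsilon> * exp (lam * s)) has_real_derivative \<epsilon> * (exp (lam * s) * lam)) (at s within {0..})"
      by (auto intro!: derivative_eq_intros)
    show ?thesis unfolding F_def by (rule DERIV_add[OF d1 d2])
  qed
  have claim: "F \<epsilon> s x > 0" if eps: "\<epsilon> > 0" and s: "s \<ge> 0" and x: "norm x = 1" for \<epsilon> s x
  proof (rule ccontr)
    assume "\<not> F \<epsilon> s x > 0"
    hence Fle: "F \<epsilon> s x \<le> 0" by simp
    define K where "K = {0..s} \<times> sphere (0::complex^'n) 1"
    define G where "G = (\<lambda>p. F \<epsilon> (fst p) (snd p))"
    have contr: "continuous_on {0..} \<rho>" by (rule cont_from_deriv[OF ode])
    have c1: "continuous_on K (\<lambda>p. \<rho> (fst p))"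
      by (rule continuous_on_compose2[OF contr continuous_on_fst[OF continuous_on_id]]) (auto simp: K_def)
    have contG: "continuous_on K G"
      unfolding G_def F_def cinner_expand
      by (intro continuous_intros c1)
    have cK: "compact K" unfolding K_def by (intro compact_Times compact_Icc compact_sphere)
    define S where "S = {p \<in> K. G p \<le> 0}"
    have clS: "closed S" unfolding S_def
      by (rule continuous_on_closed_Collect_le[OF contG continuous_on_const compact_imp_closed[OF cK]])
    have "S \<subseteq> K" by (auto simp: S_def)
    hence cS: "compact S" using compact_Int_closed[OF cK clS] by (simp add: Int_absorb1)
    have "(s, x) \<in> S" using Fle s x by (simp add: S_def K_def G_def)
    hence ne: "fst ` S \<noteq> {}" by auto
    have "compact (fst ` S)" by (rule compact_continuous_image[OF continuous_on_fst[OF continuous_on_id] cS])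
    then obtain t0 where t0S: "t0 \<in> fst ` S" and t0min: "\<forall>u\<in>fst ` S. t0 \<le> u"
      using compact_attains_inf[OF _ ne] by blast
    then obtain x0 where px0: "(t0, x0) \<in> S" by force
    hence t0s: "0 \<le> t0" "t0 \<le> s" and x0n: "norm x0 = 1" and Fx0: "F \<epsilon> t0 x0 \<le> 0"
      by (auto simp: S_def K_def G_def)
    have pos_before: "F \<epsilon> u y > 0" if "0 \<le> u" "u < t0" "norm y = 1" for u y
    proof (rule ccontr)
      assume "\<not> F \<epsilon> u y > 0"
      hence "(u, y) \<in> S" using that t0s by (auto simp: S_def K_def G_def)
      hence "t0 \<le> u" using t0min by force
      thus False using that by simp
    qed
    have t0pos: "t0 > 0"
    proof (rule ccontr)
      assume "\<not> t0 > 0" hence t00: "t0 = 0" using t0s by simp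
      have "Re (cinner x0 (\<rho> 0 *v x0)) \<ge> 0" using init by (rule psd_nonneg)
      hence "F \<epsilon> t0 x0 > 0" using eps t00 by (simp add: F_def)
      thus False using Fx0 by simp
    qed
    have ge_t0: "F \<epsilon> t0 y \<ge> 0" if y: "norm y = 1" for y
    proof -
      have "isCont (\<lambda>s. F \<epsilon> s y) t0"
        by (rule DERIV_isCont[OF real_deriv_interior[OF t0pos dF[OF t0s(1)]]])
      hence lim: "((\<lambda>s. F \<epsilon> s y) \<longlongrightarrow> F \<epsilon> t0 y) (at_left t0)"
        unfolding isCont_def by (rule tendsto_mono[OF at_le, rotated]) simp
      have ev: "eventually (\<lambda>u. 0 \<le> F \<epsilon> u y) (at_left t0)"
        using eventually_at_left_real[OF t0pos] by (rule eventually_mono) (metis greaterThanLessThan_iff less_eq_real_def pos_before y)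
      show ?thesis by (rule tendsto_lowerbound[OF lim ev]) simp
    qed
    define e where "e = \<epsilon> * exp (lam * t0)"
    have epos: "e > 0" using eps by (simp add: e_def)
    define \<eta> where "\<eta> = \<rho> t0 + e *\<^sub>R mat 1"
    have q\<eta>: "cinner y (\<eta> *v y) = cinner y (\<rho> t0 *v y) + of_real (e * (norm y)^2)" for y
      by (simp add: \<eta>_def matrix_vector_mult_add_rdistrib mv_scaleR cinner_add_right
          cinner_smult_right cinner_self)
    have sa\<eta>: "self_adjoint \<eta>"
      using sa[OF t0s(1)] by (simp add: \<eta>_def self_adjoint_def adj_add adj_scaleR)
    have psd\<eta>: "psd \<eta>"
    proof -
      have "0 \<le> Re (cinner y (\<eta> *v y))" for y
      proof (cases "y = 0")
        case True thus ?thesis by simp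
      next
        case False
        define u where "u = (1 / norm y) *\<^sub>R y"
        have nu: "norm u = 1" using False by (simp add: u_def)
        have "0 \<le> F \<epsilon> t0 u" by (rule ge_t0[OF nu])
        hence h1: "0 \<le> Re (cinner u (\<rho> t0 *v u)) + e" by (simp add: F_def e_def)
        have h2: "Re (cinner u (\<rho> t0 *v u)) = Re (cinner y (\<rho> t0 *v y)) / (norm y)^2"
          by (simp add: u_def qf_scaleR power_divide)
        have np: "(norm y)^2 > 0" using False by simp
        have "0 \<le> (Re (cinner y (\<rho> t0 *v y)) / (norm y)^2 + e) * (norm y)^2"
          using h1 h2 np by simp
        also have "\<dots> = Re (cinner y (\<rho> t0 *v y)) + e * (norm y)^2"
          using np by (simp add: field_simps)
        finally show ?thesis by (simp add: q\<eta>)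
      qed
      thus ?thesis using sa\<eta> sa_qf_real[OF sa\<eta>] by (simp add: psd_def)
    qed
    have "Re (cinner x0 (\<eta> *v x0)) = F \<epsilon> t0 x0" using x0n by (simp add: q\<eta> F_def e_def)
    hence "Re (cinner x0 (\<eta> *v x0)) = 0" using Fx0 ge_t0[OF x0n] by simp
    hence ker: "\<eta> *v x0 = 0" by (rule psd_kernel[OF psd\<eta>])
    have lin\<rho>: "lin (\<rho> t0) = lin \<eta> - e *\<^sub>R M"
      by (simp add: \<eta>_def lin_def M_def lindblad_add lindblad_scaleR)
    have g'pos: "Re (cinner x0 (lin (\<rho> t0) *v x0)) + \<epsilon> * (exp (lam * t0) * lam) > 0"
    proof -
      have k: "0 \<le> Re (cinner x0 (lin \<eta> *v x0))" unfolding lin_def by (rule nagumo_key[OF psd\<eta> ker])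
      have m: "Re (cinner x0 (M *v x0)) \<le> C" unfolding C_def by (rule qf_bound[OF x0n])
      have "Re (cinner x0 (lin (\<rho> t0) *v x0)) = Re (cinner x0 (lin \<eta> *v x0)) - e * Re (cinner x0 (M *v x0))"
        by (simp add: lin\<rho> matrix_vector_mult_diff_rdistrib mv_scaleR cinner_diff_right cinner_smult_right)
      moreover have "\<epsilon> * (exp (lam * t0) * lam) = e * C + e" by (simp add: e_def lam_def algebra_simps)
      moreover have "e * Re (cinner x0 (M *v x0)) \<le> e * C" using m epos by simp
      ultimately show ?thesis using k epos by linarith
    qed
    obtain d where d: "d > 0" "\<forall>h>0. h < d \<longrightarrow> F \<epsilon> (t0 - h) x0 < F \<epsilon> t0 x0"
      using DERIV_pos_inc_left[OF real_deriv_interior[OF t0pos dF[OF t0s(1)]] g'pos] by blast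
    define h where "h = min d t0 / 2"
    have "F \<epsilon> (t0 - h) x0 < F \<epsilon> t0 x0" using d t0pos by (simp add: h_def)
    moreover have "F \<epsilon> (t0 - h) x0 > 0" by (rule pos_before) (use d t0pos x0n in \<open>auto simp: h_def\<close>)
    ultimately show False using Fx0 by simp
  qed
  have sat: "self_adjoint (\<rho> t)" by (rule sa[OF t])
  have "0 \<le> Re (cinner y (\<rho> t *v y))" for y
  proof (cases "y = 0")
    case True thus ?thesis by simp
  next
    case False
    define u where "u = (1 / norm y) *\<^sub>R y"
    have nu: "norm u = 1" using False by (simp add: u_def)
    have ru: "Re (cinner u (\<rho> t *v u)) = Re (cinner y (\<rho> t *v y)) / (norm y)^2"
      by (simp add: u_def qf_scaleR power_divide)
    have "0 \<le> Re (cinner u (\<rho> t *v u))"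
    proof (rule ccontr)
      assume neg: "\<not> 0 \<le> Re (cinner u (\<rho> t *v u))"
      define \<epsilon> where "\<epsilon> = - Re (cinner u (\<rho> t *v u)) / (2 * exp (lam * t))"
      have "\<epsilon> > 0" using neg by (simp add: \<epsilon>_def divide_neg_pos)
      hence "F \<epsilon> t u > 0" using claim t nu by blast
      moreover have "\<epsilon> * exp (lam * t) = - Re (cinner u (\<rho> t *v u)) / 2" by (simp add: \<epsilon>_def)
      ultimately show False using neg by (simp add: F_def)
    qed
    thus ?thesis using ru False by (simp add: zero_le_divide_iff)
  qed
  thus ?thesis using sat sa_qf_real[OF sat] by (simp add: psd_def)
qed



definition cb :: "'n::finite op \<Rightarrow> real" where
  "cb M = (\<Sum>i\<in>UNIV. \<Sum>j\<in>UNIV. cmod (M$i$j))"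

lemma cb_nonneg: "0 \<le> cb M" by (simp add: cb_def sum_nonneg)

lemma qf_bound2: "cmod (cinner x (M *v x)) \<le> cb M * (norm x)^2"
proof -
  have xi: "cmod (x$i) \<le> norm x" for i using Finite_Cartesian_Product.norm_nth_le[of x i] by simp
  have "cmod (cinner x (M *v x)) \<le> (\<Sum>i\<in>UNIV. cmod (\<Sum>j\<in>UNIV. cnj (x$i) * M$i$j * x$j))"
    unfolding cinner_expand by (rule norm_sum)
  also have "\<dots> \<le> (\<Sum>i\<in>UNIV. \<Sum>j\<in>UNIV. cmod (cnj (x$i) * M$i$j * x$j))"
    by (rule sum_mono, rule norm_sum)
  also have "\<dots> \<le> (\<Sum>i\<in>UNIV. \<Sum>j\<in>UNIV. cmod (M$i$j) * (norm x)^2)"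
  proof (rule sum_mono, rule sum_mono)
    fix i j
    have "cmod (cnj (x$i) * M$i$j * x$j) = cmod (M$i$j) * (cmod (x$i) * cmod (x$j))"
      by (simp add: norm_mult)
    also have "\<dots> \<le> cmod (M$i$j) * (norm x * norm x)"
      by (intro mult_left_mono mult_mono xi) auto
    finally show "cmod (cnj (x$i) * M$i$j * x$j) \<le> cmod (M$i$j) * (norm x)^2"
      by (simp add: power2_eq_square)
  qed
  also have "\<dots> = cb M * (norm x)^2" by (simp add: cb_def sum_distrib_right)
  finally show ?thesis .
qed

lemma qf_bound3: "Re (cinner x (M *v x)) \<le> cb M * (norm x)^2"
  using qf_bound2[of x M] complex_Re_le_cmod order_trans by blast

lemma sum_list_Re_mono:
  "(\<And>v. v \<in> set vs \<Longrightarrow> Re (f v) \<le> Re (g v)) \<Longrightarrow> Re (\<Sum>v\<leftarrow>vs. f v) \<le> Re (\<Sum>v\<leftarrow>vs. g v)"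
  by (induction vs) (auto intro: add_mono)

lemma trace_bound:
  assumes "psd R"
  shows "Re (trace (X ** R)) \<le> cb X * Re (trace R)"
proof -
  obtain vs where R: "R = sum_list (map outer vs)" using psd_decomp[OF assms] by blast
  have "Re (trace (X ** R)) = Re (\<Sum>v\<leftarrow>vs. cinner v (X *v v))" by (simp add: R trace_sum_list_outer)
  also have "\<dots> \<le> Re (\<Sum>v\<leftarrow>vs. of_real (cb X) * of_real ((norm v)^2))"
    by (rule sum_list_Re_mono) (simp add: qf_bound3)
  also have "\<dots> = cb X * Re (trace R)"
  proof -
    have "(\<Sum>v\<leftarrow>vs. complex_of_real (cb X) * of_real ((norm v)^2)) = of_real (cb X) * (\<Sum>v\<leftarrow>vs. of_real ((norm v)^2))"
      by (induction vs) (simp_all add: algebra_simps)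
    thus ?thesis by (simp add: R trace_sum_list_outer1)
  qed
  finally show ?thesis .
qed

lemma amgm_aux:
  fixes a k p q \<epsilon> :: real
  assumes "a^2 \<le> k * p * q" "k \<ge> 0" "p \<ge> 0" "q \<ge> 0" "\<epsilon> > 0"
  shows "2 * a \<le> \<epsilon> * q + (k / \<epsilon>) * p"
proof (rule power2_le_imp_le)
  have e: "(\<epsilon> * q + (k / \<epsilon>) * p)^2 = (\<epsilon> * q - (k / \<epsilon>) * p)^2 + 4 * (k * p * q)"
    using assms(5) by (simp add: power2_eq_square field_simps)
  have "(2 * a)^2 = 4 * a^2" by (simp add: power2_eq_square)
  also have "\<dots> \<le> 4 * (k * p * q)" using assms(1) by simp
  also have "\<dots> \<le> (\<epsilon> * q + (k / \<epsilon>) * p)^2" unfolding e by simp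
  finally show "(2 * a)^2 \<le> (\<epsilon> * q + (k / \<epsilon>) * p)^2" .
  show "0 \<le> \<epsilon> * q + (k / \<epsilon>) * p" using assms by simp
qed

lemma ds_pointwise:
  assumes psdP: "psd P" and saV: "self_adjoint V" and eps: "\<epsilon> > 0"
  shows "Re (cinner v ((P ** V + V ** P) *v v)) \<le> \<epsilon> * (norm v)^2 + (cb P * cb (V ** V) / \<epsilon>) * Re (cinner v (P *v v))"
proof -
  have aV: "adj V = V" using saV by (simp add: self_adjoint_def)
  have aP: "adj P = P" using psdP by (simp add: psd_def self_adjoint_def)
  define z where "z = cinner v (P *v (V *v v))"
  have "cinner v (V *v (P *v v)) = cnj z"
  proof -
    have "cinner v (V *v (P *v v)) = cinner (V *v v) (P *v v)" by (simp add: cinner_adj aV)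
    also have "\<dots> = cnj (cinner (P *v v) (V *v v))" by (simp add: cinner_cnj)
    also have "cinner (P *v v) (V *v v) = z" by (simp add: z_def cinner_adj aP)
    finally show ?thesis .
  qed
  hence e: "cinner v ((P ** V + V ** P) *v v) = z + cnj z"
    by (simp add: z_def matrix_vector_mult_add_rdistrib cinner_add_right matrix_vector_mul_assoc[symmetric])
  have "Re (z + cnj z) = 2 * Re z" by simp
  also have "\<dots> \<le> 2 * cmod z" by (simp add: complex_Re_le_cmod)
  also have "\<dots> \<le> \<epsilon> * (norm v)^2 + (cb P * cb (V ** V) / \<epsilon>) * Re (cinner v (P *v v))"
  proof (rule amgm_aux)
    have "(cmod z)^2 \<le> Re (cinner v (P *v v)) * Re (cinner (V *v v) (P *v (V *v v)))"
      unfolding z_def by (rule psd_cs[OF psdP])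
    also have "\<dots> \<le> Re (cinner v (P *v v)) * (cb P * (cb (V ** V) * (norm v)^2))"
    proof (rule mult_left_mono)
      have "Re (cinner (V *v v) (P *v (V *v v))) \<le> cb P * (norm (V *v v))^2" by (rule qf_bound3)
      also have "(norm (V *v v))^2 = Re (cinner v ((V ** V) *v v))"
        by (simp add: matrix_vector_mul_assoc[symmetric] cinner_adj[of v V] aV cinner_self)
      also have "\<dots> \<le> cb (V ** V) * (norm v)^2" by (rule qf_bound3)
      finally show "Re (cinner (V *v v) (P *v (V *v v))) \<le> cb P * (cb (V ** V) * (norm v)^2)"
        by (simp add: mult_left_mono cb_nonneg)
      show "0 \<le> Re (cinner v (P *v v))" by (rule psd_nonneg[OF psdP])
    qed
    finally show "(cmod z)^2 \<le> cb P * cb (V ** V) * Re (cinner v (P *v v)) * (norm v)^2"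
      by (simp add: algebra_simps)
    show "0 \<le> cb P * cb (V ** V)" by (simp add: cb_nonneg)
    show "0 \<le> Re (cinner v (P *v v))" by (rule psd_nonneg[OF psdP])
  qed (use eps in auto)
  finally show ?thesis unfolding e .
qed

lemma ds_bound:
  assumes psdP: "psd P" and saV: "self_adjoint V" and psdR: "psd R" and eps: "\<epsilon> > 0"
  shows "Re (trace ((P ** V + V ** P) ** R)) \<le> \<epsilon> * Re (trace R) + (cb P * cb (V ** V) / \<epsilon>) * Re (trace (P ** R))"
proof -
  obtain vs where R: "R = sum_list (map outer vs)" using psd_decomp[OF psdR] by blast
  define k where "k = cb P * cb (V ** V) / \<epsilon>"
  have "Re (trace ((P ** V + V ** P) ** R)) = Re (\<Sum>v\<leftarrow>vs. cinner v ((P ** V + V ** P) *v v))"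
    by (simp add: R trace_sum_list_outer)
  also have "\<dots> \<le> Re (\<Sum>v\<leftarrow>vs. of_real \<epsilon> * of_real ((norm v)^2) + of_real k * cinner v (P *v v))"
    by (rule sum_list_Re_mono) (simp add: ds_pointwise[OF psdP saV eps, unfolded k_def[symmetric]])
  also have "(\<Sum>v\<leftarrow>vs. of_real \<epsilon> * of_real ((norm v)^2) + of_real k * cinner v (P *v v))
      = of_real \<epsilon> * (\<Sum>v\<leftarrow>vs. of_real ((norm v)^2)) + of_real k * (\<Sum>v\<leftarrow>vs. cinner v (P *v v))"
    by (induction vs) (simp_all add: algebra_simps)
  also have "Re \<dots> = \<epsilon> * Re (trace R) + k * Re (trace (P ** R))"
    by (simp add: R trace_sum_list_outer trace_sum_list_outer1)
  finally show ?thesis by (simp add: k_def)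
qed



lemma mm_neg_left: "(- A) ** B = - ((A::'n::finite op) ** B)"
  by (simp add: vec_eq_iff matrix_matrix_mult_def sum_negf)
lemma trace_neg: "trace (- (A::'n::finite op)) = - trace A"
  by (simp add: trace_def sum_negf)

lemma lim_eventually_eq:
  assumes "(X \<longlongrightarrow> l) sequentially" "eventually (\<lambda>m. X m = c) sequentially"
  shows "l = (c::'a::t2_space)"
  using LIMSEQ_unique[OF assms(1) tendsto_eventually[OF assms(2)]] .

lemma trace_E: "trace (A ** (\<chi> a b. if a = j \<and> b = i then 1 else 0)) = (A::'n::finite op) $ i $ j"
proof -
  have "trace (A ** (\<chi> a b. if a = j \<and> b = i then 1 else 0)) = (\<Sum>a\<in>UNIV. if a = i then A $ a $ j else 0)"
    unfolding trace_def matrix_matrix_mult_def by (rule sum.cong) (auto simp: if_distrib cong: if_cong)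
  thus ?thesis by simp
qed

lemma f_decreasing:
  fixes f :: "real \<Rightarrow> real"
  assumes "\<And>t. t \<ge> 0 \<Longrightarrow> (f has_real_derivative f' t) (at t within {0..})"
    and "\<And>t. t \<ge> 0 \<Longrightarrow> f' t \<le> 0" and "0 \<le> a" "a \<le> b"
  shows "f b \<le> f a"
proof -
  have "- f a \<le> - f b"
    by (rule mono_from_deriv[of "\<lambda>t. - f t" "\<lambda>t. - f' t"]) (use assms in \<open>auto intro: DERIV_minus\<close>)
  thus ?thesis by simp
qed

theorem theorem13:
  fixes H V :: "'n::finite op" and L :: "nat \<Rightarrow> 'n op" and K :: nat
    and \<rho> :: "real \<Rightarrow> 'n op"
  assumes H_sa: "self_adjoint H"
    and lyap: "lyapunov_op L K V"
    and comm: "H ** V = V ** H"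
    and cond: "(\<exists>c>0. loewner_le (gen L K V) (- (c *\<^sub>R V)))
             \<or> (loewner_le (gen L K V) 0 \<and> (\<exists>c>0. loewner_le (c *\<^sub>R V) (dissip L K V)))"
    and init: "density_state (\<rho> 0)"
    and ode: "\<And>t. t \<ge> 0 \<Longrightarrow> (\<rho> has_vector_derivative lindblad H L K (\<rho> t)) (at t within {0..})"
  shows "\<forall>\<sigma> s. filterlim s at_top sequentially \<and> state_conv (\<lambda>m. \<rho> (s m)) \<sigma>
            \<longrightarrow> \<sigma> \<in> Z_set V"
proof (intro allI impI)
  fix \<sigma> and s :: "nat \<Rightarrow> real"
  assume h: "filterlim s at_top sequentially \<and> state_conv (\<lambda>m. \<rho> (s m)) \<sigma>"
  have psdV: "psd V" and saV: "self_adjoint V" and GV0: "loewner_le (gen L K V) 0"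
    using lyap by (auto simp: lyapunov_op_def)
  have aV: "adj V = V" using saV by (simp add: self_adjoint_def)
  have psdR: "psd (\<rho> t)" if "t \<ge> 0" for t
    using psd_preserved[OF ode H_sa _ that] init by (simp add: density_state_def)
  have trR: "trace (\<rho> t) = 1" if "t \<ge> 0" for t
    using trace_const[OF ode that] init by (simp add: density_state_def)
  define G where "G = gen L K V"
  define f where "f = (\<lambda>t. Re (trace (V ** \<rho> t)))"
  have df: "(f has_real_derivative Re (trace (G ** \<rho> t))) (at t within {0..})" if "t \<ge> 0" for t
    using obs_deriv[OF ode[OF that], of V] trace_V_lindblad[OF comm] by (simp add: f_def G_def)
  have fnn: "f t \<ge> 0" if "t \<ge> 0" for t
    unfolding f_def by (rule trace_psd_nonneg[OF psdR[OF that] psdV])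
  have f'le: "Re (trace (G ** \<rho> t)) \<le> 0" if "t \<ge> 0" for t
    using loewner_trace[OF GV0 psdR[OF that]] by (simp add: G_def)
  have fdec: "f b \<le> f a" if "0 \<le> a" "a \<le> b" for a b
    by (rule f_decreasing[OF df f'le that])
  have small: "\<exists>T\<ge>0. f T < \<delta>" if dpos: "\<delta> > 0" for \<delta>
  proof (rule ccontr)
    assume "\<not> (\<exists>T\<ge>0. f T < \<delta>)"
    hence fge: "f t \<ge> \<delta>" if "t \<ge> 0" for t using that by force
    from cond show False
    proof
      assume "\<exists>c>0. loewner_le (gen L K V) (- (c *\<^sub>R V))"
      then obtain c where c: "c > 0" "loewner_le G (- (c *\<^sub>R V))" by (auto simp: G_def)
      have Gf: "Re (trace (G ** \<rho> t)) \<le> - c * f t" if "t \<ge> 0" for t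
      proof -
        have "Re (trace (G ** \<rho> t)) \<le> Re (trace ((- (c *\<^sub>R V)) ** \<rho> t))"
          by (rule loewner_trace[OF c(2) psdR[OF that]])
        also have "\<dots> = - c * f t"
          by (simp add: f_def mm_neg_left trace_neg mm_scaleR_left trace_scaleR)
        finally show ?thesis .
      qed
      define \<phi> where "\<phi> = (\<lambda>t. f t + c * \<delta> * t)"
      have d\<phi>: "(\<phi> has_real_derivative Re (trace (G ** \<rho> t)) + c * \<delta>) (at t within {0..})" if "t \<ge> 0" for t
        unfolding \<phi>_def using df[OF that] by (auto intro!: derivative_eq_intros)
      define T where "T = f 0 / (c * \<delta>) + 1"
      have T0: "T \<ge> 0" using fnn[of 0] c dpos by (simp add: T_def)
      have "\<phi> T \<le> \<phi> 0"
      proof (rule f_decreasing[OF d\<phi> _ order_refl T0])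
        fix t :: real assume t: "t \<ge> 0"
        have "c * \<delta> \<le> c * f t" using fge[OF t] c by simp
        thus "Re (trace (G ** \<rho> t)) + c * \<delta> \<le> 0" using Gf[OF t] by simp
      qed
      hence "f T \<le> f 0 - c * \<delta> * T" by (simp add: \<phi>_def)
      also have "\<dots> = - (c * \<delta>)" using c dpos by (simp add: T_def field_simps)
      finally show False using fnn[OF T0] mult_pos_pos[OF c(1) dpos] by linarith
    next
      assume "loewner_le (gen L K V) 0 \<and> (\<exists>c>0. loewner_le (c *\<^sub>R V) (dissip L K V))"
      then obtain c where c: "c > 0" "loewner_le (c *\<^sub>R V) (dissip L K V)" by auto
      define P where "P = - G"
      have psdP: "psd P" using GV0 by (simp add: P_def G_def loewner_le_def)
      define \<epsilon> where "\<epsilon> = c * \<delta> / 2"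
      have eps: "\<epsilon> > 0" using c dpos by (simp add: \<epsilon>_def)
      define A where "A = cb P * cb (V ** V) / \<epsilon>"
      have A0: "A \<ge> 0" using eps by (simp add: A_def cb_nonneg)
      define g where "g = (\<lambda>t. Re (trace ((V ** V) ** \<rho> t)))"
      have comm2: "H ** (V ** V) = (V ** V) ** H"
        by (simp add: matrix_mul_assoc comm) (simp add: matrix_mul_assoc[symmetric] comm)
      have genVV: "gen L K (V ** V) = dissip L K V - (P ** V + V ** P)"
        by (simp add: dissip_def aV P_def G_def mm_neg_left matrix_add_ldistrib[symmetric] algebra_simps)
      have dg: "(g has_real_derivative Re (trace (gen L K (V ** V) ** \<rho> t))) (at t within {0..})"
        if "t \<ge> 0" for t
        using obs_deriv[OF ode[OF that], of "V ** V"] trace_V_lindblad[OF comm2] by (simp add: g_def)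
      have g'ge: "Re (trace (gen L K (V ** V) ** \<rho> t)) \<ge> c * f t - \<epsilon> + A * Re (trace (G ** \<rho> t))"
        if t: "t \<ge> 0" for t
      proof -
        have "Re (trace (gen L K (V ** V) ** \<rho> t)) = Re (trace (dissip L K V ** \<rho> t)) - Re (trace ((P ** V + V ** P) ** \<rho> t))"
          by (simp add: genVV mm_diff_left trace_sub)
        moreover have "c * f t \<le> Re (trace (dissip L K V ** \<rho> t))"
          using loewner_trace[OF c(2) psdR[OF t]] by (simp add: f_def mm_scaleR_left trace_scaleR)
        moreover have "Re (trace ((P ** V + V ** P) ** \<rho> t)) \<le> \<epsilon> * Re (trace (\<rho> t)) + A * Re (trace (P ** \<rho> t))"
          unfolding A_def by (rule ds_bound[OF psdP saV psdR[OF t] eps])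
        moreover have "Re (trace (P ** \<rho> t)) = - Re (trace (G ** \<rho> t))"
          by (simp add: P_def mm_neg_left trace_neg)
        ultimately show ?thesis using trR[OF t] by simp
      qed
      define \<psi> where "\<psi> = (\<lambda>t. - (g t - A * f t - \<epsilon> * t))"
      have d\<psi>: "(\<psi> has_real_derivative - (Re (trace (gen L K (V ** V) ** \<rho> t)) - A * Re (trace (G ** \<rho> t)) - \<epsilon>)) (at t within {0..})"
        if "t \<ge> 0" for t
        unfolding \<psi>_def using dg[OF that] df[OF that] by (auto intro!: derivative_eq_intros)
      define T where "T = (cb (V ** V) - (g 0 - A * f 0)) / \<epsilon> + 1"
      have gle: "g t \<le> cb (V ** V)" if "t \<ge> 0" for t
        using trace_bound[OF psdR[OF that], of "V ** V"] trR[OF that] by (simp add: g_def)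
      have T0: "T \<ge> 0"
      proof -
        have "g 0 - A * f 0 \<le> cb (V ** V)" using gle[of 0] mult_nonneg_nonneg[OF A0 fnn[of 0]] by simp
        thus ?thesis using eps by (simp add: T_def)
      qed
      have "\<psi> T \<le> \<psi> 0"
      proof (rule f_decreasing[OF d\<psi> _ order_refl T0])
        fix t :: real assume t: "t \<ge> 0"
        have "c * \<delta> \<le> c * f t" using fge[OF t] c by simp
        hence "2 * \<epsilon> \<le> c * f t" by (simp add: \<epsilon>_def)
        thus "- (Re (trace (gen L K (V ** V) ** \<rho> t)) - A * Re (trace (G ** \<rho> t)) - \<epsilon>) \<le> 0"
          using g'ge[OF t] eps by simp
      qed
      hence "g 0 - A * f 0 + \<epsilon> * T \<le> g T - A * f T" by (simp add: \<psi>_def)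
      also have "\<dots> \<le> cb (V ** V)" using gle[OF T0] mult_nonneg_nonneg[OF A0 fnn[OF T0]] by simp
      finally have "\<epsilon> * T \<le> cb (V ** V) - (g 0 - A * f 0)" by simp
      moreover have "\<epsilon> * T = cb (V ** V) - (g 0 - A * f 0) + \<epsilon>" using eps by (simp add: T_def field_simps)
      ultimately show False using eps by simp
    qed
  qed
  have ev_s: "eventually (\<lambda>m. T \<le> s m) sequentially" for T
    using h by (simp add: filterlim_at_top)
  have flim: "((\<lambda>m. f (s m)) \<longlongrightarrow> 0) sequentially"
  proof (rule tendstoI)
    fix e :: real assume e: "e > 0"
    obtain T where T: "T \<ge> 0" "f T < e" using small[OF e] by blast
    show "eventually (\<lambda>m. dist (f (s m)) 0 < e) sequentially"
      using ev_s[of T]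
    proof (rule eventually_mono)
      fix m assume "T \<le> s m"
      hence "0 \<le> f (s m)" "f (s m) \<le> f T" using fnn fdec T by auto
      thus "dist (f (s m)) 0 < e" using T by simp
    qed
  qed
  have conv: "\<And>Y. ((\<lambda>m. trace (\<rho> (s m) ** Y)) \<longlongrightarrow> trace (\<sigma> ** Y)) sequentially"
    using h by (simp add: state_conv_def)
  have evpos: "eventually (\<lambda>m. 0 \<le> s m) sequentially" by (rule ev_s)
  have trV: "trace (V ** \<sigma>) = 0"
  proof -
    have c1: "((\<lambda>m. Re (trace (\<rho> (s m) ** V))) \<longlongrightarrow> Re (trace (\<sigma> ** V))) sequentially"
      by (rule tendsto_Re[OF conv])
    have "(\<lambda>m. Re (trace (\<rho> (s m) ** V))) = (\<lambda>m. f (s m))"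
      by (simp add: f_def trace_mul_sym[of _ V])
    hence re: "Re (trace (\<sigma> ** V)) = 0" using c1 flim LIMSEQ_unique by metis
    have c2: "((\<lambda>m. Im (trace (\<rho> (s m) ** V))) \<longlongrightarrow> Im (trace (\<sigma> ** V))) sequentially"
      by (rule tendsto_Im[OF conv])
    have "eventually (\<lambda>m. Im (trace (\<rho> (s m) ** V)) = 0) sequentially"
      using evpos by (rule eventually_mono)
        (simp add: trace_mul_sym[of _ V] trace_psd_real[OF psdR saV])
    hence im: "Im (trace (\<sigma> ** V)) = 0" by (rule lim_eventually_eq[OF c2])
    have "trace (\<sigma> ** V) = 0" using re im by (simp add: complex_eq_iff)
    thus ?thesis by (simp add: trace_mul_sym[of V])
  qed
  have entry: "((\<lambda>m. \<rho> (s m) $ i $ j) \<longlongrightarrow> \<sigma> $ i $ j) sequentially" for i j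
    using conv[of "\<chi> a b. if a = j \<and> b = i then 1 else 0"] by (simp add: trace_E)
  have saS: "self_adjoint \<sigma>"
  proof -
    have "cnj (\<sigma> $ j $ i) = \<sigma> $ i $ j" for i j
    proof -
      have l: "((\<lambda>m. cnj (\<rho> (s m) $ j $ i)) \<longlongrightarrow> cnj (\<sigma> $ j $ i)) sequentially"
        by (rule tendsto_cnj[OF entry])
      have ev: "eventually (\<lambda>m. \<rho> (s m) $ i $ j = cnj (\<rho> (s m) $ j $ i)) sequentially"
        using evpos by (rule eventually_mono) (simp add: sa_entry psd_sa psdR)
      have "((\<lambda>m. cnj (\<rho> (s m) $ j $ i)) \<longlongrightarrow> \<sigma> $ i $ j) sequentially"
        by (rule Lim_transform_eventually[OF entry ev])
      thus ?thesis using l LIMSEQ_unique by metis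
    qed
    thus ?thesis by (simp add: self_adjoint_def vec_eq_iff)
  qed
  have qS: "0 \<le> Re (cinner x (\<sigma> *v x)) \<and> Im (cinner x (\<sigma> *v x)) = 0" for x
  proof -
    have l: "((\<lambda>m. cinner x (\<rho> (s m) *v x)) \<longlongrightarrow> cinner x (\<sigma> *v x)) sequentially"
      using conv[of "outer x"] by (simp add: trace_outer)
    have "0 \<le> Re (cinner x (\<sigma> *v x))"
      by (rule tendsto_lowerbound[OF tendsto_Re[OF l]])
         (use evpos in \<open>auto elim!: eventually_mono intro: psd_nonneg psdR\<close>)
    moreover have "Im (cinner x (\<sigma> *v x)) = 0"
      using sa_qf_real[OF saS] .
    ultimately show ?thesis by simp
  qed
  have trS: "trace \<sigma> = 1"
  proof -
    have "((\<lambda>m. trace (\<rho> (s m))) \<longlongrightarrow> trace \<sigma>) sequentially"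
      using conv[of "mat 1"] by simp
    moreover have "eventually (\<lambda>m. trace (\<rho> (s m)) = 1) sequentially"
      using evpos by (rule eventually_mono) (simp add: trR)
    ultimately show ?thesis by (rule lim_eventually_eq)
  qed
  show "\<sigma> \<in> Z_set V"
    using saS qS trS trV by (simp add: Z_set_def density_state_def psd_def)
qed


end
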